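(* $\mathbf{M}$ is a lower triangular square matrix with $M_{i,i}=1$ for all $i\in[0,2^{m}-1]$. Thus $\mathbf{M}$ is invertible over $\mathbb{F}_2$.
   Context: Let $m\ge1$, $N=2^m$, $\mathbf{R}_m=\mathbb{F}_2[x_0,\dots,x_{m-1}]/(x_0^2-x_0,\dots,x_{m-1}^2-x_{m-1})$, and $\operatorname{ev}(Q)$ the evaluation vector of $Q\in\mathbf{R}_m$ at all points of $\mathbb{F}_2^m$. Let $\boldsymbol{G}_N=\begin{pmatrix}1&0\\1&1\end{pmatrix}^{\otimes m}$; row $i$ of $\boldsymbol{G}_N$ is $\operatorname{ev}$ of the monomial $x_0^{b_0}\cdots x_{m-1}^{b_{m-1}}$ with $(b_0,\dots,b_{m-1})$ the binary expansion of $2^m-1-i$. Let $\mathbf{P}\in\mathbb{F}_2^{N\times N}$ be upper triangular with ones on the diagonal (defining an upper polynomial polar code spanned by selected rows of $\mathbf{P}\boldsymbol{G}_N$). For a monomial $h$, $\check{h}=x_0\cdots x_{m-1}/h$ is its multiplicative complement; $f\mid g$ means the set of variables of $f$ is contained in that of $g$; $\operatorname{terms}(Q)$ is the set of monomials appearing in $Q$. The matrix $\mathbf{M}$ is defined by $M_{i,j}=|\{g\in\operatorname{terms}(P_j)\mid \check{g}\mid \check{f}\}| \pmod 2$, where $\operatorname{ev}(P_j)$ is row $j$ of $\mathbf{P}\boldsymbol{G}_N$ and $\operatorname{ev}(f)$ is row $i$ of $\boldsymbol{G}_N$. *)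

theory Defs
  imports "Jordan_Normal_Form.Matrix" "HOL-Library.Z2"
begin

text \<open>F_2 is the type bit of HOL-Library.Z2. A monomial of R_m is identified
with its set of variables (a subset of {0..<m}); an element of R_m is its
coefficient function on monomials.\<close>

type_synonym monomial = "nat set"
type_synonym rpoly = "monomial \<Rightarrow> bit"

text \<open>Variable set of the monomial whose evaluation is row i of G_N:
binary expansion of 2^m - 1 - i.\<close>
definition row_monomial :: "nat \<Rightarrow> nat \<Rightarrow> monomial" where
  "row_monomial m i = {b. b < m \<and> bit (2 ^ m - 1 - i) b}"

definition terms :: "rpoly \<Rightarrow> monomial set" where
  "terms Q = {g. Q g \<noteq> 0}"

definition mcompl :: "nat \<Rightarrow> monomial \<Rightarrow> monomial" where
  "mcompl m h = {..<m} - h"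

definition mdvd :: "monomial \<Rightarrow> monomial \<Rightarrow> bool" where
  "mdvd f g \<longleftrightarrow> f \<subseteq> g"

text \<open>P_j: the polynomial whose evaluation is row j of P G_N, i.e.
  P_j = sum_k P(j,k) * (monomial of row k of G_N).\<close>
definition P_poly :: "nat \<Rightarrow> bit mat \<Rightarrow> nat \<Rightarrow> rpoly" where
  "P_poly m P j = (\<lambda>g. \<Sum>k<2^m. P $$ (j,k) * (if row_monomial m k = g then 1 else 0))"

definition M_mat :: "nat \<Rightarrow> bit mat \<Rightarrow> bit mat" where
  "M_mat m P = mat (2^m) (2^m) (\<lambda>(i,j).
     of_nat (card {g \<in> terms (P_poly m P j).
                    mdvd (mcompl m g) (mcompl m (row_monomial m i))}))"

end

theory Submission
  imports Defs "Jordan_Normal_Form.Determinant"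
begin

lemma bits_sub_le:
  fixes a b :: nat
  assumes "a < 2^m" "{k. k < m \<and> bit a k} \<subseteq> {k. k < m \<and> bit b k}"
  shows "a \<le> b"
proof -
  have "and a b = a"
  proof (rule bit_eqI)
    fix n assume "possible_bit TYPE(nat) n"
    show "bit (and a b) n = bit a n"
    proof (cases "n < m")
      case True then show ?thesis using assms(2) by (auto simp: bit_and_iff)
    next
      case False
      then have "\<not> bit a n" using assms(1)
        by (metis bit_take_bit_iff take_bit_nat_eq_self_iff)
      then show ?thesis by (simp add: bit_and_iff)
    qed
  qed
  then have "int a = and (int a) (int b)" by (metis of_nat_and_eq)
  also have "\<dots> \<le> int b" by simp
  finally show ?thesis by simp
qed

lemma row_sub_le:
  assumes "i < 2^m" "k < 2^m" "row_monomial m i \<subseteq> row_monomial m k"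
  shows "k \<le> i"
proof -
  have "2^m - 1 - i \<le> 2^m - 1 - k"
    by (rule bits_sub_le[of _ m]) (use assms in \<open>auto simp: row_monomial_def\<close>)
  then show ?thesis using assms by simp
qed

lemma row_sub: "row_monomial m i \<subseteq> {..<m}"
  by (auto simp: row_monomial_def)

lemma terms_P:
  assumes "g \<in> terms (P_poly m P j)"
  shows "\<exists>k<2^m. row_monomial m k = g \<and> P $$ (j,k) \<noteq> 0"
proof (rule ccontr)
  assume "\<not> ?thesis"
  then have "P_poly m P j g = 0" unfolding P_poly_def by (intro sum.neutral) auto
  then show False using assms by (simp add: terms_def)
qed

lemma P_at_row:
  assumes "i < 2^m" "j < 2^m"
  shows "P_poly m P j (row_monomial m i) = P $$ (j,i)"
proof -
  have eq: "\<And>k. k < 2^m \<Longrightarrow> (row_monomial m k = row_monomial m i) = (k = i)"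
    using row_sub_le assms by (metis order_refl le_antisym)
  have "P_poly m P j (row_monomial m i) = (\<Sum>k<2^m. P $$ (j,k) * (if k = i then 1 else 0))"
    unfolding P_poly_def by (rule sum.cong) (auto simp: eq)
  also have "\<dots> = P $$ (j,i)" using assms by (simp add: if_distrib cong: if_cong)
  finally show ?thesis .
qed

lemma mdvd_compl:
  assumes "g \<subseteq> {..<m}" "f \<subseteq> {..<m}"
  shows "mdvd (mcompl m g) (mcompl m f) = (f \<subseteq> g)"
  using assms unfolding mdvd_def mcompl_def by blast

theorem lemma7:
  fixes m :: nat and P :: "bit mat"
  assumes "m \<ge> 1"
    and "P \<in> carrier_mat (2^m) (2^m)"
    and "upper_triangular P"
    and "\<forall>i < 2^m. P $$ (i,i) = 1"
  shows "M_mat m P \<in> carrier_mat (2^m) (2^m)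
    \<and> (\<forall>i < 2^m. \<forall>j < 2^m. i < j \<longrightarrow> M_mat m P $$ (i,j) = 0)
    \<and> (\<forall>i < 2^m. M_mat m P $$ (i,i) = 1)
    \<and> invertible_mat (M_mat m P)"
proof -
  let ?N = "(2::nat)^m"
  let ?S = "\<lambda>i j. {g \<in> terms (P_poly m P j). mdvd (mcompl m g) (mcompl m (row_monomial m i))}"
  have ut: "\<And>j k. j < ?N \<Longrightarrow> k < j \<Longrightarrow> P $$ (j,k) = 0"
    using assms(2,3) unfolding upper_triangular_def by auto
  have memS: "\<exists>k<?N. g = row_monomial m k \<and> j \<le> k \<and> k \<le> i"
    if "g \<in> ?S i j" "i < ?N" "j < ?N" for g i j
  proof -
    from that terms_P obtain k where k: "k < ?N" "row_monomial m k = g" "P $$ (j,k) \<noteq> 0"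
      by blast
    have "j \<le> k" using ut[of j k] k that by force
    moreover have "row_monomial m i \<subseteq> g"
      using that(1) k(2) mdvd_compl[OF _ row_sub, of g m i] row_sub[of m k] by auto
    then have "k \<le> i" using row_sub_le[of i m k] k that by auto
    ultimately show ?thesis using k by auto
  qed
  have Mij: "M_mat m P $$ (i,j) = of_nat (card (?S i j))" if "i < ?N" "j < ?N" for i j
    using that unfolding M_mat_def by simp
  have low: "\<forall>i < ?N. \<forall>j < ?N. i < j \<longrightarrow> M_mat m P $$ (i,j) = 0"
  proof (intro allI impI)
    fix i j assume ij: "i < ?N" "j < ?N" "i < j"
    have "?S i j = {}" using memS[OF _ ij(1,2)] ij(3) by force
    then have "card (?S i j) = 0" by (simp only: card.empty)
    then show "M_mat m P $$ (i,j) = 0" using Mij[OF ij(1,2)] by simp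
  qed
  have diag: "\<forall>i < ?N. M_mat m P $$ (i,i) = 1"
  proof (intro allI impI)
    fix i assume i: "i < ?N"
    have "?S i i \<subseteq> {row_monomial m i}" using memS[OF _ i i] by force
    moreover have "row_monomial m i \<in> ?S i i"
      using P_at_row[OF i i, of P] assms(4) i
      by (simp add: terms_def mdvd_def)
    ultimately have "?S i i = {row_monomial m i}" by blast
    then show "M_mat m P $$ (i,i) = 1" using Mij[OF i i] by simp
  qed
  have car: "M_mat m P \<in> carrier_mat ?N ?N" unfolding M_mat_def by simp
  have "det (M_mat m P) = prod_list (diag_mat (M_mat m P))"
    by (rule det_lower_triangular[OF _ car]) (use low in auto)
  also have "diag_mat (M_mat m P) = map (\<lambda>i. 1) [0..<?N]"
    using diag car unfolding diag_mat_def by (intro map_cong) auto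
  also have "prod_list \<dots> = 1" by (simp add: map_replicate_const)
  finally have d: "det (M_mat m P) \<noteq> 0" by simp
  have U: "M_mat m P \<in> Units (ring_mat TYPE(bit) ?N ?N)"
    by (rule det_non_zero_imp_unit[OF car d])
  have inv: "invertible_mat (M_mat m P)"
    using U car unfolding Units_def ring_mat_def invertible_mat_def inverts_mat_def square_mat.simps
    by auto
  show ?thesis using car low diag inv by blast
qed

end
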